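(* Let $I\subseteq\mathbb{R}$ be an interval, $f:I\to\mathbb{R}$ differentiable on the interior $I^\circ$, and $a,b\in I^\circ$ with $a<b$, $f'\in L[a,b]$. Let $g:[a,b]\to\mathbb{R}$ be continuous, $\alpha>0$, $q>1$ and $p=\frac{q}{q-1}$ (so $1/p+1/q=1$). If $|f'|^q$ is convex on $[a,b]$, then, with $m=\frac{a+b}{2}$, $$\left|f(m)\left[J^{\alpha}_{m-}g(a)+J^{\alpha}_{m+}g(b)\right]-\left[J^{\alpha}_{m-}(fg)(a)+J^{\alpha}_{m+}(fg)(b)\right]\right|$$ $$\le \frac{\|g\|_{[a,b],\infty}(b-a)^{\alpha+1}}{2^{\alpha+1+\frac2q}(\alpha p+1)^{1/p}\Gamma(\alpha+1)}\left[\big(3|f'(a)|^q+|f'(b)|^q\big)^{1/q}+\big(|f'(a)|^q+3|f'(b)|^q\big)^{1/q}\right].$$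
   Context: For $\alpha>0$ and an integrable function $h$, the Riemann–Liouville fractional integrals are $J^{\alpha}_{c+}h(x)=\frac{1}{\Gamma(\alpha)}\int_c^x (x-t)^{\alpha-1}h(t)\,dt$ for $x>c$, and $J^{\alpha}_{c-}h(x)=\frac{1}{\Gamma(\alpha)}\int_x^c (t-x)^{\alpha-1}h(t)\,dt$ for $x<c$, where $\Gamma$ is the Gamma function. Thus, with $m=\frac{a+b}{2}$, $J^{\alpha}_{m-}h(a)=\frac{1}{\Gamma(\alpha)}\int_a^{m}(t-a)^{\alpha-1}h(t)\,dt$ and $J^{\alpha}_{m+}h(b)=\frac{1}{\Gamma(\alpha)}\int_{m}^{b}(b-t)^{\alpha-1}h(t)\,dt$. Here $fg$ denotes the pointwise product. For a continuous $g$ and an interval $[c,d]$, $\|g\|_{[c,d],\infty}=\sup_{x\in[c,d]}|g(x)|$. *)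

theory Defs
  imports "HOL-Analysis.Analysis"
begin

text \<open>Left-sided RL fractional integral at x, lower terminal c:
  J^alpha_{c+} h (x) = 1/Gamma(alpha) * int_c^x (x-t)^(alpha-1) h(t) dt  (for x > c).\<close>
definition RL_left :: "real \<Rightarrow> real \<Rightarrow> (real \<Rightarrow> real) \<Rightarrow> real \<Rightarrow> real" where
  "RL_left \<alpha> c h x = integral {c..x} (\<lambda>t. (x - t) powr (\<alpha> - 1) * h t) / Gamma \<alpha>"

text \<open>Right-sided RL fractional integral at x, upper terminal c:
  J^alpha_{c-} h (x) = 1/Gamma(alpha) * int_x^c (t-x)^(alpha-1) h(t) dt  (for x < c).\<close>
definition RL_right :: "real \<Rightarrow> real \<Rightarrow> (real \<Rightarrow> real) \<Rightarrow> real \<Rightarrow> real" where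
  "RL_right \<alpha> c h x = integral {x..c} (\<lambda>t. (t - x) powr (\<alpha> - 1) * h t) / Gamma \<alpha>"

end

theory Submission
  imports Defs
begin


lemma young_int:
  fixes u w :: "real \<Rightarrow> real"
  assumes ac: "a \<le> c" and cu: "continuous_on {a..c} u" and cw: "continuous_on {a..c} w"
    and u0: "\<And>s. s \<in> {a..c} \<Longrightarrow> u s \<ge> 0" and w0: "\<And>s. s \<in> {a..c} \<Longrightarrow> w s \<ge> 0"
    and p: "p > 1" and q: "q > 1" and pq: "1/p + 1/q = 1"
    and U: "((\<lambda>s. u s powr p) has_integral U) {a..c}" and W: "((\<lambda>s. w s powr q) has_integral W) {a..c}"
    and U0: "U > 0" and W0: "W > 0"
  shows "integral {a..c} (\<lambda>s. u s * w s) \<le> U powr (1/p) * W powr (1/q)"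
proof -
  define X where "X = U powr (1/p)"
  define Y where "Y = W powr (1/q)"
  have X0: "X > 0" and Y0: "Y > 0" using U0 W0 by (auto simp: X_def Y_def)
  have Xp: "X powr p = U" using U0 p by (simp add: X_def powr_powr)
  have Yq: "Y powr q = W" using W0 q by (simp add: Y_def powr_powr)
  have pt: "u s * w s \<le> X * Y * (u s powr p / (p * U) + w s powr q / (q * W))" if s: "s \<in> {a..c}" for s
  proof -
    have "(u s / X) * (w s / Y) \<le> (u s / X) powr p / p + (w s / Y) powr q / q"
      by (rule Youngs_inequality) (use p q pq u0 w0 s X0 Y0 in auto)
    also have "\<dots> = u s powr p / (p * U) + w s powr q / (q * W)"
      using u0 w0 s X0 Y0 by (simp add: powr_divide Xp Yq mult.commute)
    finally have "(u s / X) * (w s / Y) \<le> u s powr p / (p * U) + w s powr q / (q * W)" .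
    then have "X * Y * ((u s / X) * (w s / Y)) \<le> X * Y * (u s powr p / (p * U) + w s powr q / (q * W))"
      using X0 Y0 by (intro mult_left_mono) auto
    then show ?thesis using X0 Y0 by (simp add: field_simps)
  qed
  have int1: "((\<lambda>s. u s * w s) has_integral integral {a..c} (\<lambda>s. u s * w s)) {a..c}"
    by (intro integrable_integral integrable_continuous_interval continuous_on_mult cu cw)
  have int2: "((\<lambda>s. X * Y * (u s powr p / (p * U) + w s powr q / (q * W))) has_integral
      X * Y * (U / (p * U) + W / (q * W))) {a..c}"
    by (intro has_integral_mult_right has_integral_add has_integral_divide U W)
  have "integral {a..c} (\<lambda>s. u s * w s) \<le> X * Y * (U / (p * U) + W / (q * W))"
    by (rule has_integral_le[OF int1 int2]) (use pt in auto)
  also have "\<dots> = X * Y" using U0 W0 pq by simp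
  finally show ?thesis by (simp add: X_def Y_def)
qed



lemma pow_int:
  fixes a s \<gamma> :: real
  assumes g: "\<gamma> > 0" and as: "a \<le> s"
  shows "((\<lambda>t. (t - a) powr (\<gamma> - 1)) has_integral (s - a) powr \<gamma> / \<gamma>) {a..s}"
proof -
  have "((\<lambda>t. (t - a) powr (\<gamma> - 1)) has_integral ((s - a) powr \<gamma> / \<gamma> - (a - a) powr \<gamma> / \<gamma>)) {a..s}"
  proof (rule fundamental_theorem_of_calculus_interior[OF as])
    show "continuous_on {a..s} (\<lambda>t. (t - a) powr \<gamma> / \<gamma>)"
      using g by (intro continuous_intros continuous_on_powr') auto
    fix x assume x: "x \<in> {a<..<s}"
    have "((\<lambda>t. (t - a) powr \<gamma> / \<gamma>) has_real_derivative (\<gamma> * (x - a) powr (\<gamma> - 1) * 1 / \<gamma>)) (at x)"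
      using x by (auto intro!: derivative_eq_intros)
    then show "((\<lambda>t. (t - a) powr \<gamma> / \<gamma>) has_vector_derivative (x - a) powr (\<gamma> - 1)) (at x)"
      using g by (simp add: has_real_derivative_iff_has_vector_derivative)
  qed
  then show ?thesis by simp
qed



lemma lemL:
  fixes F F' g :: "real \<Rightarrow> real" and a h \<alpha> q p M A B :: real
  assumes h: "h > 0" and alpha: "\<alpha> > 0" and q: "q > 1" and p: "p = q / (q - 1)"
    and gc: "continuous_on {a..a+h} g" and gM: "\<And>t. t \<in> {a..a+h} \<Longrightarrow> \<bar>g t\<bar> \<le> M"
    and Fd: "\<And>s. s \<in> {a..a+h} \<Longrightarrow> (F has_real_derivative F' s) (at s)"
    and F'i: "F' absolutely_integrable_on {a..a+h}"
    and cvx: "\<And>s. s \<in> {a..a+h} \<Longrightarrow> \<bar>F' s\<bar> powr q \<le> A + (B - A) * (s - a) / (2 * h)"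
    and A0: "A \<ge> 0" and B0: "B \<ge> 0"
  shows "\<bar>F (a+h) * integral {a..a+h} (\<lambda>t. (t-a) powr (\<alpha>-1) * g t)
          - integral {a..a+h} (\<lambda>t. (t-a) powr (\<alpha>-1) * (F t * g t))\<bar>
         \<le> M * (2*h) powr (\<alpha>+1) / (2 powr (\<alpha>+1+2/q) * (\<alpha>*p+1) powr (1/p) * \<alpha>) * (3*A+B) powr (1/q)"
proof -
  define c where "c = a + h"
  have ac: "a < c" using h by (simp add: c_def)
  define k where "k t = (t - a) powr (\<alpha> - 1)" for t
  define kg where "kg t = k t * g t" for t
  have M0: "M \<ge> 0" using gM[of a] ac by (auto simp: c_def)
  have kint: "(k has_integral (s - a) powr \<alpha> / \<alpha>) {a..s}" if "a \<le> s" for s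
    unfolding k_def by (rule pow_int[OF alpha that])
  have kabs: "k absolutely_integrable_on {a..c}"
    by (rule nonnegative_absolutely_integrable_1) (use kint[of c] ac in \<open>auto simp: k_def\<close>)
  have gmeas: "g \<in> borel_measurable (lebesgue_on {a..c})"
    using gc by (intro continuous_imp_measurable_on_sets_lebesgue) (auto simp: c_def)
  have gbdd: "bounded (g ` {a..c})"
    using gc by (intro compact_imp_bounded compact_continuous_image) (auto simp: c_def)
  have kgabs: "kg absolutely_integrable_on {a..c}"
  proof -
    have "(\<lambda>t. g t * k t) absolutely_integrable_on {a..c}"
      by (rule absolutely_integrable_bounded_measurable_product_real[OF gmeas _ gbdd kabs]) auto
    moreover have "kg = (\<lambda>t. g t * k t)" by (auto simp: kg_def fun_eq_iff)
    ultimately show ?thesis by simp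
  qed
  have kgint: "kg integrable_on {a..c}" using kgabs by (rule set_lebesgue_integral_eq_integral(1))
  define G where "G = (\<lambda>s. integral {a..s} kg)"
  have Gc: "continuous_on {a..c} G"
    unfolding G_def by (rule indefinite_integral_continuous_1[OF kgint])
  have Gd: "(G has_real_derivative kg s) (at s)" if s: "s \<in> {a<..<c}" for s
  proof -
    have "continuous (at s within ({a..c} - {})) kg"
    proof -
      have "isCont k s" using s unfolding k_def by (auto intro!: continuous_intros)
      moreover have "continuous (at s within {a..c}) g"
        using gc s by (simp add: continuous_on_eq_continuous_within c_def)
      ultimately show ?thesis unfolding kg_def
        by (auto intro: continuous_intros continuous_at_imp_continuous_at_within)
    qed
    from integral_has_vector_derivative_continuous_at[OF kgint _ _ this] s
    have "(G has_vector_derivative kg s) (at s within {a..c})" by (auto simp: G_def)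
    then show ?thesis using s
      by (simp add: at_within_Icc_at has_real_derivative_iff_has_vector_derivative)
  qed
  have Gb: "\<bar>G s\<bar> \<le> M / \<alpha> * (s - a) powr \<alpha>" if s: "s \<in> {a..c}" for s
  proof -
    have "norm (integral {a..s} kg) \<le> integral {a..s} (\<lambda>t. M * k t)"
    proof (rule integral_norm_bound_integral)
      show "kg integrable_on {a..s}" using kgint s by (auto intro: integrable_on_subinterval)
      show "(\<lambda>t. M * k t) integrable_on {a..s}" using has_integral_mult_right[OF kint[of s], of M] s by (auto simp: integrable_on_def)
      fix t assume t: "t \<in> {a..s}"
      have "\<bar>g t\<bar> \<le> M" using gM[of t] t s by (auto simp: c_def)
      moreover have "k t \<ge> 0" by (simp add: k_def)
      ultimately show "norm (kg t) \<le> M * k t"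
        by (simp add: kg_def abs_mult) (metis mult.commute mult_left_mono)
    qed
    also have "\<dots> = M * ((s - a) powr \<alpha> / \<alpha>)" using kint[of s] s by (simp add: integral_unique)
    finally show ?thesis by (simp add: G_def)
  qed
  have Fc: "continuous_on {a..c} F"
    by (intro continuous_at_imp_continuous_on ballI DERIV_isCont[OF Fd]) (auto simp: c_def)
  have Phi: "((\<lambda>s. kg s * (F c - F s) + G s * (0 - F' s)) has_integral
      (G c * (F c - F c) - G a * (F c - F a))) {a..c}"
  proof (rule fundamental_theorem_of_calculus_interior)
    show "a \<le> c" using ac by simp
    show "continuous_on {a..c} (\<lambda>s. G s * (F c - F s))"
      using Gc Fc by (intro continuous_intros)
    fix x assume x: "x \<in> {a<..<c}"
    have "((\<lambda>s. G s * (F c - F s)) has_real_derivative (kg x * (F c - F x) + G x * (0 - F' x))) (at x)"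
    proof -
      have d1: "(G has_real_derivative kg x) (at x)" using Gd x .
      have d2: "((\<lambda>s. F c - F s) has_real_derivative (0 - F' x)) (at x)"
        using x by (intro DERIV_diff DERIV_const Fd) (auto simp: c_def)
      from DERIV_mult[OF d1 d2] show ?thesis by (simp add: algebra_simps)
    qed
    then show "((\<lambda>s. G s * (F c - F s)) has_vector_derivative (kg x * (F c - F x) + G x * (0 - F' x))) (at x)"
      by (simp add: has_real_derivative_iff_has_vector_derivative)
  qed
  have Ga: "G a = 0" by (simp add: G_def)
  have Gmeas: "G \<in> borel_measurable (lebesgue_on {a..c})"
    using Gc by (intro continuous_imp_measurable_on_sets_lebesgue) auto
  have Gbdd: "bounded (G ` {a..c})"
    using Gc by (intro compact_imp_bounded compact_continuous_image) auto
  have GF'abs: "(\<lambda>s. G s * F' s) absolutely_integrable_on {a..c}"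
    by (rule absolutely_integrable_bounded_measurable_product_real[OF Gmeas _ Gbdd]) (use F'i in \<open>auto simp: c_def\<close>)
  have GF'int: "(\<lambda>s. G s * F' s) integrable_on {a..c}"
    using GF'abs by (rule set_lebesgue_integral_eq_integral(1))
  have Phi2: "((\<lambda>s. kg s * (F c - F s)) has_integral integral {a..c} (\<lambda>s. G s * F' s)) {a..c}"
  proof -
    have "((\<lambda>s. (kg s * (F c - F s) + G s * (0 - F' s)) + G s * F' s) has_integral
       (0 + integral {a..c} (\<lambda>s. G s * F' s))) {a..c}"
      using has_integral_add[OF Phi integrable_integral[OF GF'int]] Ga by simp
    then show ?thesis by simp
  qed
  have eq1: "F c * integral {a..c} kg - integral {a..c} (\<lambda>t. k t * (F t * g t))
      = integral {a..c} (\<lambda>s. G s * F' s)"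
  proof -
    have "integral {a..c} (\<lambda>t. k t * (F t * g t)) = integral {a..c} (\<lambda>t. F c * kg t - kg t * (F c - F t))"
      by (rule integral_cong) (simp add: kg_def algebra_simps)
    also have "\<dots> = F c * integral {a..c} kg - integral {a..c} (\<lambda>t. kg t * (F c - F t))"
      using integrable_on_cmult_left[OF kgint, of "F c"] Phi2 by (subst integral_diff) (auto simp: integrable_on_def mult.commute)
    finally show ?thesis using Phi2 by (simp add: integral_unique)
  qed
  define u where "u s = (s - a) powr \<alpha>" for s
  define cl where "cl s = A + (B - A) * (s - a) / (2 * h)" for s
  define w where "w s = cl s powr (1/q)" for s
  have cl0: "cl s \<ge> 0" if "s \<in> {a..c}" for s
  proof -
    have "(s - a) / (2*h) \<le> 1" "(s - a) / (2*h) \<ge> 0" using that h by (auto simp: c_def field_simps)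
    then have "(1 - (s - a) / (2*h)) * A + ((s - a) / (2*h)) * B \<ge> 0"
      using A0 B0 by (intro add_nonneg_nonneg mult_nonneg_nonneg) auto
    moreover have "cl s = (1 - (s - a) / (2*h)) * A + ((s - a) / (2*h)) * B"
      using h by (simp add: cl_def field_simps)
    ultimately show ?thesis by simp
  qed
  have F'w: "\<bar>F' s\<bar> \<le> w s" if s: "s \<in> {a..c}" for s
  proof -
    have "\<bar>F' s\<bar> = (\<bar>F' s\<bar> powr q) powr (1/q)" using q by (simp add: powr_powr)
    also have "\<dots> \<le> cl s powr (1/q)"
      using cvx[of s] s q by (intro powr_mono2) (auto simp: cl_def c_def)
    finally show ?thesis by (simp add: w_def)
  qed
  have uc: "continuous_on {a..c} u" unfolding u_def
    using alpha by (intro continuous_intros continuous_on_powr') auto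
  have clc: "continuous_on {a..c} cl" unfolding cl_def using h by (intro continuous_intros) auto
  have wc: "continuous_on {a..c} w" unfolding w_def
    using q cl0 by (intro continuous_intros continuous_on_powr' clc) auto
  have uwint: "(\<lambda>s. M / \<alpha> * (u s * w s)) integrable_on {a..c}"
    by (intro integrable_continuous_interval continuous_intros uc wc)
  have bound1: "\<bar>integral {a..c} (\<lambda>s. G s * F' s)\<bar> \<le> integral {a..c} (\<lambda>s. M / \<alpha> * (u s * w s))"
  proof -
    have "norm (integral {a..c} (\<lambda>s. G s * F' s)) \<le> integral {a..c} (\<lambda>s. M / \<alpha> * (u s * w s))"
    proof (rule integral_norm_bound_integral[OF GF'int uwint])
      fix s assume s: "s \<in> {a..c}"
      have "\<bar>G s\<bar> * \<bar>F' s\<bar> \<le> (M / \<alpha> * u s) * w s"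
        using Gb[OF s] F'w[OF s] M0 alpha by (intro mult_mono) (auto simp: u_def)
      then show "norm (G s * F' s) \<le> M / \<alpha> * (u s * w s)" by (simp add: abs_mult)
    qed
    then show ?thesis by simp
  qed
  define U where "U = h powr (\<alpha>*p+1) / (\<alpha>*p+1)"
  define W where "W = h * (3*A+B) / 4"
  have p1: "p > 1" using q by (simp add: p field_simps)
  have ap: "\<alpha>*p+1 > 0" using alpha p1 by (smt (verit) mult_pos_pos)
  have pq: "1/p + 1/q = 1" using q by (simp add: p field_simps)
  have Uint: "((\<lambda>s. u s powr p) has_integral U) {a..c}"
  proof -
    have "((\<lambda>t. (t - a) powr ((\<alpha>*p+1) - 1)) has_integral (c - a) powr (\<alpha>*p+1) / (\<alpha>*p+1)) {a..c}"
      using ap ac by (intro pow_int) auto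
    then show ?thesis by (simp add: u_def powr_powr U_def c_def)
  qed
  have Wint: "((\<lambda>s. w s powr q) has_integral W) {a..c}"
  proof -
    have "(cl has_integral ((A*c + (B-A)*(c-a)^2/(4*h)) - (A*a + (B-A)*(a-a)^2/(4*h)))) {a..c}"
    proof (rule fundamental_theorem_of_calculus_interior)
      show "a \<le> c" using ac by simp
      show "continuous_on {a..c} (\<lambda>y. A * y + (B - A) * (y - a)^2 / (4 * h))" using h by (intro continuous_intros) auto
      fix x assume x: "x \<in> {a<..<c}"
      have "((\<lambda>y. A * y + (B - A) * (y - a)^2 / (4 * h)) has_real_derivative cl x) (at x)"
        using h by (auto intro!: derivative_eq_intros simp: cl_def field_simps)
      then show "((\<lambda>y. A * y + (B - A) * (y - a)^2 / (4 * h)) has_vector_derivative cl x) (at x)"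
        by (simp add: has_real_derivative_iff_has_vector_derivative)
    qed
    moreover have "(A*c + (B-A)*(c-a)^2/(4*h)) - (A*a + (B-A)*(a-a)^2/(4*h)) = W"
      using h by (simp add: c_def W_def field_simps power2_eq_square)
    ultimately have "(cl has_integral W) {a..c}" by simp
    then show ?thesis
      by (rule has_integral_eq[rotated]) (use cl0 q in \<open>auto simp: w_def powr_powr\<close>)
  qed
  have U0: "U > 0" using h ap by (simp add: U_def)
  have holder: "integral {a..c} (\<lambda>s. u s * w s) \<le> U powr (1/p) * W powr (1/q)"
  proof (cases "W > 0")
    case True
    show ?thesis
      by (rule young_int[OF _ uc wc _ _ p1 q pq Uint Wint U0 True]) (use ac in \<open>auto simp: u_def w_def\<close>)
  next
    case False
    have "3*A+B \<le> 0"
    proof (rule ccontr)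
      assume "\<not> 3*A+B \<le> 0"
      then have "h * (3*A+B) > 0" using h by simp
      then show False using False by (simp add: W_def)
    qed
    then have "A = 0" "B = 0" using A0 B0 by linarith+
    then have "\<And>s. w s = 0" by (simp add: w_def cl_def)
    then show ?thesis using False by simp
  qed
  have e1: "U powr (1/p) = h powr (\<alpha> + 1/p) / (\<alpha>*p+1) powr (1/p)"
    using p1 by (simp add: U_def powr_divide powr_powr field_simps)
  have e2: "W powr (1/q) = h powr (1/q) * (3*A+B) powr (1/q) / 2 powr (2/q)"
  proof -
    have "(4::real) powr (1/q) = 2 powr (2/q)"
      using powr_powr[of 2 2 "1/q"] by simp
    then show ?thesis using h A0 B0 by (simp add: W_def powr_divide powr_mult)
  qed
  have e3: "(2*h) powr (\<alpha>+1) = 2 powr (\<alpha>+1) * (h powr (\<alpha> + 1/p) * h powr (1/q))"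
    using pq by (simp add: powr_mult powr_add[symmetric] add.assoc)
  have e4: "(2::real) powr (\<alpha>+1+2/q) = 2 powr (\<alpha>+1) * 2 powr (2/q)" by (simp add: powr_add)
  have fin: "M / \<alpha> * (U powr (1/p) * W powr (1/q))
     = M * (2*h) powr (\<alpha>+1) / (2 powr (\<alpha>+1+2/q) * (\<alpha>*p+1) powr (1/p) * \<alpha>) * (3*A+B) powr (1/q)"
    unfolding e1 e2 e3 e4 using alpha ap by (simp add: field_simps)
  have k1: "(\<lambda>t. (t-a) powr (\<alpha>-1) * g t) = kg" by (simp add: fun_eq_iff kg_def k_def)
  have k2: "(\<lambda>t. (t-a) powr (\<alpha>-1) * (F t * g t)) = (\<lambda>t. k t * (F t * g t))" by (simp add: fun_eq_iff k_def)
  have "\<bar>F c * integral {a..c} kg - integral {a..c} (\<lambda>t. k t * (F t * g t))\<bar>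
      \<le> integral {a..c} (\<lambda>s. M / \<alpha> * (u s * w s))" using eq1 bound1 by simp
  also have "\<dots> = M / \<alpha> * integral {a..c} (\<lambda>s. u s * w s)" by simp
  also have "\<dots> \<le> M / \<alpha> * (U powr (1/p) * W powr (1/q))"
    using holder M0 alpha by (intro mult_left_mono) auto
  finally show ?thesis unfolding k1 k2 fin c_def .
qed


lemma refl1:
  fixes f :: "real \<Rightarrow> real"
  assumes "(f has_integral i) {a..b}"
  shows "((\<lambda>x. f (d - x)) has_integral i) {d-b..d-a}"
proof -
  have "((\<lambda>x. f (-x)) has_integral i) {-b..-a}" using assms by simp
  from has_integral_affinity'[OF this[unfolded box_real(2)[symmetric]], of 1 "-d"]
  show ?thesis by (simp add: box_real algebra_simps)
qed

lemma refl_iff: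
  fixes f :: "real \<Rightarrow> real"
  shows "((\<lambda>x. f (d - x)) has_integral i) {d-b..d-a} \<longleftrightarrow> (f has_integral i) {a..b}"
  using refl1[of f i a b d] refl1[of "\<lambda>x. f (d - x)" i "d-b" "d-a" d] by auto

lemma integral_refl:
  fixes f :: "real \<Rightarrow> real"
  shows "integral {d-b..d-a} (\<lambda>x. f (d - x)) = integral {a..b} f"
proof (cases "f integrable_on {a..b}")
  case True
  then show ?thesis using refl_iff[where f=f and d=d and a=a and b=b] by (auto intro: integral_unique)
next
  case False
  then have "\<not> (\<lambda>x. f (d - x)) integrable_on {d-b..d-a}"
    using refl_iff[where f=f and d=d and a=a and b=b] by (auto simp: integrable_on_def)
  then show ?thesis using False by (simp add: not_integrable_integral)
qed

lemma absint_refl: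
  fixes f :: "real \<Rightarrow> real"
  assumes "f absolutely_integrable_on {a..b}"
  shows "(\<lambda>x. f (d - x)) absolutely_integrable_on {d-b..d-a}"
  using assms refl_iff[where f=f and d=d and a=a and b=b] refl_iff[where f="\<lambda>x. norm (f x)" and d=d and a=a and b=b]
  unfolding absolutely_integrable_on_def integrable_on_def by auto



theorem theorem2p6:
  fixes I :: "real set" and f g :: "real \<Rightarrow> real" and a b \<alpha> q p :: real
  assumes I: "is_interval I"
    and fdiff: "\<And>x. x \<in> interior I \<Longrightarrow> f differentiable (at x)"
    and ab: "a \<in> interior I" "b \<in> interior I" "a < b"
    and f'int: "(deriv f) absolutely_integrable_on {a..b}"
    and gcont: "continuous_on {a..b} g"
    and alpha: "\<alpha> > 0"
    and q: "q > 1"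
    and p: "p = q / (q - 1)"
    and conv: "convex_on {a..b} (\<lambda>x. \<bar>deriv f x\<bar> powr q)"
  shows "\<bar>f ((a+b)/2) * (RL_right \<alpha> ((a+b)/2) g a + RL_left \<alpha> ((a+b)/2) g b)
           - (RL_right \<alpha> ((a+b)/2) (\<lambda>t. f t * g t) a + RL_left \<alpha> ((a+b)/2) (\<lambda>t. f t * g t) b)\<bar>
         \<le> (SUP x\<in>{a..b}. \<bar>g x\<bar>) * (b - a) powr (\<alpha> + 1)
             / (2 powr (\<alpha> + 1 + 2 / q) * (\<alpha> * p + 1) powr (1 / p) * Gamma (\<alpha> + 1))
           * ((3 * \<bar>deriv f a\<bar> powr q + \<bar>deriv f b\<bar> powr q) powr (1 / q)
              + (\<bar>deriv f a\<bar> powr q + 3 * \<bar>deriv f b\<bar> powr q) powr (1 / q))"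
proof -
  define m where "m = (a+b)/2"
  define h where "h = (b-a)/2"
  have h0: "h > 0" using ab by (simp add: h_def)
  have ah: "a + h = m" by (simp add: m_def h_def field_simps)
  have h2: "2 * h = b - a" by (simp add: h_def)
  define M where "M = (SUP x\<in>{a..b}. \<bar>g x\<bar>)"
  define \<phi> where "\<phi> x = \<bar>deriv f x\<bar> powr q" for x
  define A where "A = \<phi> a"
  define B where "B = \<phi> b"
  have A0: "A \<ge> 0" and B0: "B \<ge> 0" by (auto simp: A_def B_def \<phi>_def)
  have sub: "{a..b} \<subseteq> interior I"
  proof -
    have "is_interval (interior I)"
      using I by (simp add: is_interval_convex_1 convex_interior)
    then have iv: "\<And>u v x. u \<in> interior I \<Longrightarrow> v \<in> interior I \<Longrightarrow> u \<le> x \<Longrightarrow> x \<le> v \<Longrightarrow> x \<in> interior I"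
      unfolding is_interval_1 by blast
    show ?thesis
    proof
      fix x assume "x \<in> {a..b}"
      then show "x \<in> interior I" using iv[OF ab(1) ab(2)] by simp
    qed
  qed
  have fd: "(f has_real_derivative deriv f s) (at s)" if "s \<in> {a..b}" for s
    using fdiff[of s] sub that by (auto simp: DERIV_deriv_iff_real_differentiable)
  have gM: "\<bar>g t\<bar> \<le> M" if "t \<in> {a..b}" for t
  proof -
    have "bounded ((\<lambda>x. \<bar>g x\<bar>) ` {a..b})"
      using gcont by (intro compact_imp_bounded compact_continuous_image continuous_intros) auto
    then have "bdd_above ((\<lambda>x. \<bar>g x\<bar>) ` {a..b})" by (rule bounded_imp_bdd_above)
    then show ?thesis unfolding M_def using that by (rule cSUP_upper2) auto
  qed
  have chord: "\<phi> s \<le> A + (B - A) * (s - a) / (b - a)" if s: "s \<in> {a..b}" for s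
  proof -
    define t where "t = (s - a) / (b - a)"
    have t01: "0 \<le> t" "t \<le> 1" using s ab by (auto simp: t_def field_simps)
    have tt: "t * (b - a) = s - a" using ab by (simp add: t_def)
    have st: "(1 - t) *\<^sub>R a + t *\<^sub>R b = s"
    proof -
      have "(1 - t) *\<^sub>R a + t *\<^sub>R b = a + t * (b - a)" by (simp add: algebra_simps)
      then show ?thesis using tt by simp
    qed
    have "\<phi> ((1 - t) *\<^sub>R a + t *\<^sub>R b) \<le> (1 - t) * \<phi> a + t * \<phi> b"
      using convex_onD[OF conv t01] ab unfolding \<phi>_def by auto
    then have "\<phi> s \<le> (1 - t) * A + t * B" unfolding st A_def B_def .
    moreover have "(1 - t) * A + t * B = A + (B - A) * t" by (simp add: algebra_simps)
    moreover have "(B - A) * t = (B - A) * (s - a) / (b - a)" by (simp add: t_def)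
    ultimately show ?thesis by simp
  qed
  have bh: "b - h = a + h" by (simp add: h_def field_simps)
  have mb: "a + h \<le> b" using ab by (simp add: h_def field_simps)
  have sub2: "{a..a+h} \<subseteq> {a..b}" using mb by auto
  have sub3: "{a+h..b} \<subseteq> {a..b}" using h0 by auto
  have L1: "\<bar>f (a+h) * integral {a..a+h} (\<lambda>t. (t-a) powr (\<alpha>-1) * g t)
          - integral {a..a+h} (\<lambda>t. (t-a) powr (\<alpha>-1) * (f t * g t))\<bar>
         \<le> M * (2*h) powr (\<alpha>+1) / (2 powr (\<alpha>+1+2/q) * (\<alpha>*p+1) powr (1/p) * \<alpha>) * (3*A+B) powr (1/q)"
  proof (rule lemL[OF h0 alpha q p])
    show "continuous_on {a..a+h} g" using gcont sub2 by (rule continuous_on_subset)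
    show "\<bar>g t\<bar> \<le> M" if "t \<in> {a..a+h}" for t using gM sub2 that by auto
    show "(f has_real_derivative deriv f s) (at s)" if "s \<in> {a..a+h}" for s using fd sub2 that by auto
    show "deriv f absolutely_integrable_on {a..a+h}"
      using f'int sub2 by (rule absolutely_integrable_on_subinterval)
    show "\<bar>deriv f s\<bar> powr q \<le> A + (B - A) * (s - a) / (2 * h)" if "s \<in> {a..a+h}" for s
      using chord[of s] sub2 that h2 by (auto simp: \<phi>_def)
  qed (use A0 B0 in auto)
  define f2 where "f2 = (\<lambda>x. f (a + b - x))"
  define g2 where "g2 = (\<lambda>x. g (a + b - x))"
  have L2: "\<bar>f2 (a+h) * integral {a..a+h} (\<lambda>t. (t-a) powr (\<alpha>-1) * g2 t)
          - integral {a..a+h} (\<lambda>t. (t-a) powr (\<alpha>-1) * (f2 t * g2 t))\<bar>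
         \<le> M * (2*h) powr (\<alpha>+1) / (2 powr (\<alpha>+1+2/q) * (\<alpha>*p+1) powr (1/p) * \<alpha>) * (3*B+A) powr (1/q)"
  proof (rule lemL[OF h0 alpha q p, where F'="\<lambda>x. - deriv f (a + b - x)"])
    show "continuous_on {a..a+h} g2" unfolding g2_def
      by (rule continuous_on_compose2[OF gcont]) (use sub2 in \<open>auto intro!: continuous_intros\<close>)
    show "\<bar>g2 t\<bar> \<le> M" if "t \<in> {a..a+h}" for t using gM[of "a+b-t"] sub2 that by (auto simp: g2_def)
    show "(f2 has_real_derivative - deriv f (a + b - s)) (at s)" if s: "s \<in> {a..a+h}" for s
    proof -
      have d1: "((\<lambda>x. a + b - x) has_real_derivative -1) (at s)" by (auto intro!: derivative_eq_intros)
      have "a + b - s \<in> {a..b}" using s sub2 by auto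
      from DERIV_chain2[OF fd[OF this] d1] show ?thesis by (simp add: f2_def)
    qed
    show "(\<lambda>x. - deriv f (a + b - x)) absolutely_integrable_on {a..a+h}"
    proof -
      have "deriv f absolutely_integrable_on {a+h..b}"
        using f'int sub3 by (rule absolutely_integrable_on_subinterval)
      then have "(\<lambda>x. - deriv f x) absolutely_integrable_on {a+h..b}"
        unfolding absolutely_integrable_on_def by (auto intro: integrable_neg)
      from absint_refl[OF this, of "a+b"] show ?thesis by (simp add: algebra_simps bh)
    qed
    show "\<bar>- deriv f (a + b - s)\<bar> powr q \<le> B + (A - B) * (s - a) / (2 * h)" if s: "s \<in> {a..a+h}" for s
    proof -
      have "a + b - s \<in> {a..b}" using s sub2 by auto
      from chord[OF this] have "\<phi> (a + b - s) \<le> A + (B - A) * (b - s) / (b - a)" by simp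
      moreover have r: "(b - s) / (b - a) = 1 - (s - a) / (b - a)" using ab by (simp add: field_simps)
      have "(B - A) * (b - s) / (b - a) = (B - A) * (1 - (s - a) / (b - a))"
        by (simp only: times_divide_eq_right[symmetric] r)
      moreover have gen: "A + (B - A) * (1 - r) = B + (A - B) * r" for r :: real
        by (simp add: algebra_simps)
      note gen[of "(s - a) / (b - a)"]
      ultimately have "\<phi> (a + b - s) \<le> B + (A - B) * ((s - a) / (b - a))" by linarith
      then show ?thesis using h2 by (simp add: \<phi>_def)
    qed
  qed (use A0 B0 in auto)
  have abh: "{(a+b)-b..(a+b)-(a+h)} = {a..a+h}" using bh by simp
  have R1: "integral {a+h..b} (\<lambda>t. (b-t) powr (\<alpha>-1) * g t) = integral {a..a+h} (\<lambda>t. (t-a) powr (\<alpha>-1) * g2 t)"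
    using integral_refl[of "a+b" b "a+h" "\<lambda>t. (b-t) powr (\<alpha>-1) * g t"] unfolding abh
    by (simp add: g2_def algebra_simps)
  have R2: "integral {a+h..b} (\<lambda>t. (b-t) powr (\<alpha>-1) * (f t * g t)) = integral {a..a+h} (\<lambda>t. (t-a) powr (\<alpha>-1) * (f2 t * g2 t))"
    using integral_refl[of "a+b" b "a+h" "\<lambda>t. (b-t) powr (\<alpha>-1) * (f t * g t)"] unfolding abh
    by (simp add: g2_def f2_def algebra_simps)
  have f2m: "f2 (a+h) = f (a+h)" using bh by (simp add: f2_def algebra_simps)
  have mh: "(a+b)/2 = a+h" using ah by (simp add: m_def)
  have G0: "Gamma \<alpha> > 0" using alpha by simp
  have G1: "Gamma (\<alpha> + 1) = \<alpha> * Gamma \<alpha>" by (rule Gamma_plus1) (use alpha in \<open>auto elim!: nonpos_Ints_cases\<close>)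
  define D where "D = 2 powr (\<alpha>+1+2/q) * (\<alpha>*p+1) powr (1/p)"
  have pp: "p > 0" using q by (simp add: p)
  have app: "\<alpha>*p+1 > 0" using alpha pp by (smt (verit) mult_pos_pos)
  have Dpos: "D > 0" using app by (simp add: D_def)
  define X1 where "X1 = f (a+h) * integral {a..a+h} (\<lambda>t. (t-a) powr (\<alpha>-1) * g t)
          - integral {a..a+h} (\<lambda>t. (t-a) powr (\<alpha>-1) * (f t * g t))"
  define X2 where "X2 = f (a+h) * integral {a..a+h} (\<lambda>t. (t-a) powr (\<alpha>-1) * g2 t)
          - integral {a..a+h} (\<lambda>t. (t-a) powr (\<alpha>-1) * (f2 t * g2 t))"
  have lhs: "f ((a+b)/2) * (RL_right \<alpha> ((a+b)/2) g a + RL_left \<alpha> ((a+b)/2) g b)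
           - (RL_right \<alpha> ((a+b)/2) (\<lambda>t. f t * g t) a + RL_left \<alpha> ((a+b)/2) (\<lambda>t. f t * g t) b)
       = (X1 + X2) / Gamma \<alpha>"
    unfolding mh RL_right_def RL_left_def R1 R2 X1_def X2_def f2m using G0 by (simp add: field_simps)
  have "\<bar>X1 + X2\<bar> / Gamma \<alpha> \<le> (\<bar>X1\<bar> + \<bar>X2\<bar>) / Gamma \<alpha>"
    using G0 by (intro divide_right_mono) auto
  also have "\<dots> \<le> (M * (2*h) powr (\<alpha>+1) / (D * \<alpha>) * (3*A+B) powr (1/q)
      + M * (2*h) powr (\<alpha>+1) / (D * \<alpha>) * (3*B+A) powr (1/q)) / Gamma \<alpha>"
    using L1 L2 f2m G0 unfolding X1_def X2_def D_def by (intro divide_right_mono add_mono) (auto simp: mult.assoc)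
  also have "\<dots> = M * (b - a) powr (\<alpha> + 1) / (D * Gamma (\<alpha> + 1))
      * ((3 * A + B) powr (1 / q) + (A + 3 * B) powr (1 / q))"
    unfolding G1 h2 using G0 alpha Dpos by (simp add: field_simps add.commute)
  finally show ?thesis
    unfolding lhs abs_divide using G0 by (simp add: M_def D_def A_def B_def \<phi>_def mult.assoc)
qed
end
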